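(* In System $\mathsf{F_{<:}^{K\top}}$, for all $\Theta\vdash S$ and $\Theta\vdash T$: $\Theta \vdash S <: T$ if and only if $\Theta \vdash_A S <: T$.
   Context: System $\mathsf{F_{<:}^{K\top}}$: raw types $T ::= \top \mid X \mid T\to T \mid \forall^{\mathsf K}(X<:T).T \mid \forall^\top(X<:T).T$, up to $\alpha$-conversion. Contexts $\Theta$: finite sequences of $X<:T$ or $x:T$ with distinct variables, each type well-formed over the preceding part. Declarative subtyping $\Theta\vdash S<:T$: (Var) $\Theta,X<:T,\Theta'\vdash X<:T$; (Top) $\Theta\vdash T<:\top$; (Refl) $\Theta\vdash T<:T$; (Trans) from $T<:T'$ and $T'<:T''$ infer $T<:T''$; ($\to$) from $\Theta\vdash S'<:S$ and $\Theta\vdash T<:T'$ infer $\Theta\vdash S\to T<:S'\to T'$; ($\forall$-Fun) from $\Theta,X<:S\vdash T<:T'$ infer $\Theta\vdash\forall^{\mathsf K}(X<:S).T<:\forall^{\mathsf K}(X<:S).T'$; ($\forall$-Loc) from $\Theta\vdash T_0<:S_0$ and $\Theta,X<:S_0\vdash S_1<:T_1$ infer $\Theta\vdash\forall^{\mathsf K}(X<:S_0).S_1<:\forall^\top(X<:T_0).T_1$; ($\forall$-Top) from $\Theta\vdash T_0<:S_0$ and $\Theta,X<:\top\vdash S_1<:T_1$ infer $\Theta\vdash\forall^\top(X<:S_0).S_1<:\forall^\top(X<:T_0).T_1$. Algorithmic subtyping $\Theta\vdash_A S<:T$: (1) $\Theta\vdash_A T<:\top$; (2) $\Theta\vdash_A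 X<:X$; (3) if $T\not\equiv\top$, $T\not\equiv X$ and $\Theta,X<:S,\Theta'\vdash_A S<:T$, then $\Theta,X<:S,\Theta'\vdash_A X<:T$; (4)–(7) the rules $\to$, $\forall$-Fun, $\forall$-Loc, $\forall$-Top above with $\vdash$ replaced by $\vdash_A$ throughout. *)

theory Defs
  imports Main
begin

text \<open>Raw types of System F<:^{K Top}, in de Bruijn representation (so types are
  identified up to alpha-conversion). Index i refers to the i-th binding of the
  context counted from the most recent one (term-variable bindings also count).\<close>

datatype ty =
    Top
  | TVar nat
  | Arr ty ty
  | AllK ty ty    \<comment> \<open>\<forall>^K(X<:T1).T2, X bound in T2 as index 0\<close>
  | AllT ty ty

text \<open>Contexts are lists with the most recent binding first. The type stored in a
  binding lives in the context that follows it in the list (the preceding part).\<close>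

datatype binding = VarB ty | TVarB ty

type_synonym env = "binding list"

fun shiftT :: "nat \<Rightarrow> nat \<Rightarrow> ty \<Rightarrow> ty" where
  "shiftT n k Top = Top"
| "shiftT n k (TVar i) = (if i < k then TVar i else TVar (i + n))"
| "shiftT n k (Arr T U) = Arr (shiftT n k T) (shiftT n k U)"
| "shiftT n k (AllK T U) = AllK (shiftT n k T) (shiftT n (Suc k) U)"
| "shiftT n k (AllT T U) = AllT (shiftT n k T) (shiftT n (Suc k) U)"

fun is_TVarB :: "binding \<Rightarrow> bool" where
  "is_TVarB (TVarB _) = True"
| "is_TVarB (VarB _) = False"

fun wf_ty :: "env \<Rightarrow> ty \<Rightarrow> bool" where
  "wf_ty \<Gamma> Top = True"
| "wf_ty \<Gamma> (TVar i) = (i < length \<Gamma> \<and> is_TVarB (\<Gamma> ! i))"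
| "wf_ty \<Gamma> (Arr T U) = (wf_ty \<Gamma> T \<and> wf_ty \<Gamma> U)"
| "wf_ty \<Gamma> (AllK T U) = (wf_ty \<Gamma> T \<and> wf_ty (TVarB T # \<Gamma>) U)"
| "wf_ty \<Gamma> (AllT T U) = (wf_ty \<Gamma> T \<and> wf_ty (TVarB T # \<Gamma>) U)"

fun wf_env :: "env \<Rightarrow> bool" where
  "wf_env [] = True"
| "wf_env (VarB T # \<Gamma>) = (wf_env \<Gamma> \<and> wf_ty \<Gamma> T)"
| "wf_env (TVarB T # \<Gamma>) = (wf_env \<Gamma> \<and> wf_ty \<Gamma> T)"

inductive sub :: "env \<Rightarrow> ty \<Rightarrow> ty \<Rightarrow> bool" where
  S_Var: "\<lbrakk>wf_env \<Gamma>; i < length \<Gamma>; \<Gamma> ! i = TVarB U\<rbrakk>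
          \<Longrightarrow> sub \<Gamma> (TVar i) (shiftT (Suc i) 0 U)"
| S_Top: "\<lbrakk>wf_env \<Gamma>; wf_ty \<Gamma> T\<rbrakk> \<Longrightarrow> sub \<Gamma> T Top"
| S_Refl: "\<lbrakk>wf_env \<Gamma>; wf_ty \<Gamma> T\<rbrakk> \<Longrightarrow> sub \<Gamma> T T"
| S_Trans: "\<lbrakk>sub \<Gamma> T T'; sub \<Gamma> T' T''\<rbrakk> \<Longrightarrow> sub \<Gamma> T T''"
| S_Arr: "\<lbrakk>sub \<Gamma> S' S; sub \<Gamma> T T'\<rbrakk> \<Longrightarrow> sub \<Gamma> (Arr S T) (Arr S' T')"
| S_AllFun: "sub (TVarB S # \<Gamma>) T T' \<Longrightarrow> sub \<Gamma> (AllK S T) (AllK S T')"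
| S_AllLoc: "\<lbrakk>sub \<Gamma> T0 S0; sub (TVarB S0 # \<Gamma>) S1 T1\<rbrakk>
             \<Longrightarrow> sub \<Gamma> (AllK S0 S1) (AllT T0 T1)"
| S_AllTop: "\<lbrakk>sub \<Gamma> T0 S0; sub (TVarB Top # \<Gamma>) S1 T1\<rbrakk>
             \<Longrightarrow> sub \<Gamma> (AllT S0 S1) (AllT T0 T1)"

inductive asub :: "env \<Rightarrow> ty \<Rightarrow> ty \<Rightarrow> bool" where
  A_Top: "\<lbrakk>wf_env \<Gamma>; wf_ty \<Gamma> T\<rbrakk> \<Longrightarrow> asub \<Gamma> T Top"
| A_Refl: "\<lbrakk>wf_env \<Gamma>; wf_ty \<Gamma> (TVar i)\<rbrakk> \<Longrightarrow> asub \<Gamma> (TVar i) (TVar i)"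
| A_Var: "\<lbrakk>T \<noteq> Top; T \<noteq> TVar i; i < length \<Gamma>; \<Gamma> ! i = TVarB U;
           asub \<Gamma> (shiftT (Suc i) 0 U) T\<rbrakk> \<Longrightarrow> asub \<Gamma> (TVar i) T"
| A_Arr: "\<lbrakk>asub \<Gamma> S' S; asub \<Gamma> T T'\<rbrakk> \<Longrightarrow> asub \<Gamma> (Arr S T) (Arr S' T')"
| A_AllFun: "asub (TVarB S # \<Gamma>) T T' \<Longrightarrow> asub \<Gamma> (AllK S T) (AllK S T')"
| A_AllLoc: "\<lbrakk>asub \<Gamma> T0 S0; asub (TVarB S0 # \<Gamma>) S1 T1\<rbrakk>
             \<Longrightarrow> asub \<Gamma> (AllK S0 S1) (AllT T0 T1)"
| A_AllTop: "\<lbrakk>asub \<Gamma> T0 S0; asub (TVarB Top # \<Gamma>) S1 T1\<rbrakk>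
             \<Longrightarrow> asub \<Gamma> (AllT S0 S1) (AllT T0 T1)"

end

theory Submission
  imports Defs
begin

lemma wf_ty_tags:
  "wf_ty \<Gamma> T \<Longrightarrow> map is_TVarB \<Gamma> = map is_TVarB \<Gamma>' \<Longrightarrow> wf_ty \<Gamma>' T"
proof (induction T arbitrary: \<Gamma> \<Gamma>')
  case (TVar i)
  then show ?case by (metis length_map nth_map wf_ty.simps(2))
qed auto

lemma wf_ty_weaken:
  "wf_ty (\<Delta> @ \<Gamma>) T \<Longrightarrow> map is_TVarB \<Delta>2 = map is_TVarB \<Delta>
   \<Longrightarrow> wf_ty (\<Delta>2 @ \<Delta>' @ \<Gamma>) (shiftT (length \<Delta>') (length \<Delta>) T)"
proof (induction T arbitrary: \<Delta> \<Delta>2)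
  case (TVar i)
  have len: "length \<Delta>2 = length \<Delta>" using TVar(2) by (metis length_map)
  show ?case
  proof (cases "i < length \<Delta>")
    case True
    then show ?thesis using TVar len
      by (simp add: nth_append) (metis nth_map)
  next
    case False
    then show ?thesis using TVar len by (auto simp: nth_append)
  qed
next
  case (AllK T U)
  then show ?case
    using AllK.IH(2)[of "TVarB T # \<Delta>" "TVarB (shiftT (length \<Delta>') (length \<Delta>) T) # \<Delta>2"]
    by simp
next
  case (AllT T U)
  then show ?case
    using AllT.IH(2)[of "TVarB T # \<Delta>" "TVarB (shiftT (length \<Delta>') (length \<Delta>) T) # \<Delta>2"]
    by simp
qed auto

lemma wf_env_lookup:
  "wf_env \<Gamma> \<Longrightarrow> i < length \<Gamma> \<Longrightarrow> \<Gamma> ! i = TVarB U \<Longrightarrow> wf_ty (drop (Suc i) \<Gamma>) U"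
proof (induction \<Gamma> arbitrary: i rule: wf_env.induct)
  case (2 T \<Gamma>) then show ?case by (cases i) auto
next
  case (3 T \<Gamma>) then show ?case by (cases i) auto
qed auto

lemma wf_shift_lookup:
  assumes "wf_env \<Gamma>" "i < length \<Gamma>" "\<Gamma> ! i = TVarB U"
  shows "wf_ty \<Gamma> (shiftT (Suc i) 0 U)"
proof -
  have "wf_ty ([] @ drop (Suc i) \<Gamma>) U" using wf_env_lookup assms by simp
  from wf_ty_weaken[OF this, of "[]" "take (Suc i) \<Gamma>"]
  show ?thesis using assms by simp
qed

lemma wf_env_narrow:
  "wf_env (\<Delta> @ TVarB Q # \<Gamma>) \<Longrightarrow> wf_ty \<Gamma> P \<Longrightarrow> wf_env (\<Delta> @ TVarB P # \<Gamma>)"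
proof (induction \<Delta>)
  case (Cons B \<Delta>)
  have m: "map is_TVarB (\<Delta> @ TVarB Q # \<Gamma>) = map is_TVarB (\<Delta> @ TVarB P # \<Gamma>)" by simp
  show ?case using Cons wf_ty_tags[OF _ m] by (cases B) auto
qed auto

lemma wf_ty_rebind: "wf_ty (TVarB A # \<Gamma>) T \<Longrightarrow> wf_ty (TVarB B # \<Gamma>) T"
  by (erule wf_ty_tags) simp

lemma asub_wf: "asub \<Gamma> S T \<Longrightarrow> wf_env \<Gamma> \<and> wf_ty \<Gamma> S \<and> wf_ty \<Gamma> T"
proof (induction rule: asub.induct)
  case (A_AllTop \<Gamma> T0 S0 S1 T1)
  then show ?case using wf_ty_rebind[of Top \<Gamma> S1 S0] wf_ty_rebind[of Top \<Gamma> T1 T0] by simp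
next
  case (A_AllLoc \<Gamma> T0 S0 S1 T1)
  then show ?case using wf_ty_rebind[of S0 \<Gamma> T1 T0] by simp
qed auto

lemma sub_wf: "sub \<Gamma> S T \<Longrightarrow> wf_env \<Gamma> \<and> wf_ty \<Gamma> S \<and> wf_ty \<Gamma> T"
proof (induction rule: sub.induct)
  case (S_Var \<Gamma> i U)
  then show ?case using wf_shift_lookup by auto
next
  case (S_AllTop \<Gamma> T0 S0 S1 T1)
  then show ?case using wf_ty_rebind[of Top \<Gamma> S1 S0] wf_ty_rebind[of Top \<Gamma> T1 T0] by simp
next
  case (S_AllLoc \<Gamma> T0 S0 S1 T1)
  then show ?case using wf_ty_rebind[of S0 \<Gamma> T1 T0] by simp
qed auto

lemma asub_refl: "wf_env \<Gamma> \<Longrightarrow> wf_ty \<Gamma> T \<Longrightarrow> asub \<Gamma> T T"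
proof (induction T arbitrary: \<Gamma>)
  case Top then show ?case by (auto intro: asub.intros)
next
  case (TVar x) then show ?case by (auto intro: asub.intros)
next
  case (Arr T1 T2) then show ?case by (auto intro: asub.intros)
next
  case (AllK T1 T2) then show ?case by (auto intro: asub.intros)
next
  case (AllT T1 T2)
  have "wf_ty (TVarB Top # \<Gamma>) T2" using AllT wf_ty_tags[of "TVarB T1 # \<Gamma>" T2 "TVarB Top # \<Gamma>"] by auto
  then show ?case using AllT by (auto intro: asub.intros)
qed

lemma asub_Top_inv: "asub \<Gamma> Top T \<Longrightarrow> T = Top"
  by (cases rule: asub.cases) auto

lemma asub_Arr_inv: "asub \<Gamma> (Arr A B) T \<Longrightarrow>
  T = Top \<or> (\<exists>A' B'. T = Arr A' B' \<and> asub \<Gamma> A' A \<and> asub \<Gamma> B B')"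
  by (cases rule: asub.cases) auto

lemma asub_AllK_inv: "asub \<Gamma> (AllK A B) T \<Longrightarrow>
  T = Top \<or> (\<exists>B'. T = AllK A B' \<and> asub (TVarB A # \<Gamma>) B B')
   \<or> (\<exists>A' B'. T = AllT A' B' \<and> asub \<Gamma> A' A \<and> asub (TVarB A # \<Gamma>) B B')"
  by (cases rule: asub.cases) auto

lemma asub_AllT_inv: "asub \<Gamma> (AllT A B) T \<Longrightarrow>
  T = Top \<or> (\<exists>A' B'. T = AllT A' B' \<and> asub \<Gamma> A' A \<and> asub (TVarB Top # \<Gamma>) B B')"
  by (cases rule: asub.cases) auto

lemma asub_narrow_top:
  "asub \<Gamma>0 M N \<Longrightarrow> \<Gamma>0 = \<Delta> @ TVarB Top # \<Gamma> \<Longrightarrow> wf_ty \<Gamma> P \<Longrightarrow> asub (\<Delta> @ TVarB P # \<Gamma>) M N"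
proof (induction arbitrary: \<Delta> rule: asub.induct)
  case (A_Top \<Gamma>' T)
  have m: "map is_TVarB (\<Delta> @ TVarB Top # \<Gamma>) = map is_TVarB (\<Delta> @ TVarB P # \<Gamma>)" by simp
  show ?case using A_Top wf_env_narrow wf_ty_tags[OF _ m] by (auto intro: asub.intros)
next
  case (A_Refl \<Gamma>' i)
  have m: "map is_TVarB (\<Delta> @ TVarB Top # \<Gamma>) = map is_TVarB (\<Delta> @ TVarB P # \<Gamma>)" by simp
  show ?case using A_Refl wf_env_narrow wf_ty_tags[OF _ m]
    by (metis asub.A_Refl)
next
  case (A_Var T i \<Gamma>' U)
  show ?case
  proof (cases "i = length \<Delta>")
    case True
    then have "U = Top" using A_Var by simp
    then have "T = Top" using A_Var asub_Top_inv by simp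
    then show ?thesis using A_Var by simp
  next
    case False
    then have "(\<Delta> @ TVarB P # \<Gamma>) ! i = TVarB U" using A_Var
      by (auto simp: nth_append nth_Cons split: nat.splits)
    then show ?thesis using A_Var False by (intro asub.A_Var) auto
  qed
next
  case (A_Arr \<Gamma>' S' S T T')
  then show ?case by (auto intro: asub.intros)
next
  case (A_AllFun S \<Gamma>' T T')
  then show ?case using A_AllFun.IH[of "TVarB S # \<Delta>"] by (auto intro: asub.intros)
next
  case (A_AllLoc \<Gamma>' T0 S0 S1 T1)
  then show ?case using A_AllLoc.IH(2)[of "TVarB S0 # \<Delta>"] by (auto intro: asub.intros)
next
  case (A_AllTop \<Gamma>' T0 S0 S1 T1)
  then show ?case using A_AllTop.IH(2)[of "TVarB Top # \<Delta>"] by (auto intro: asub.intros)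
qed

lemma asub_trans_aux:
  "asub \<Gamma> S Q \<Longrightarrow> asub \<Gamma> Q T \<Longrightarrow>
   (\<And>Q' \<Gamma>' S' T'. size Q' < size Q \<Longrightarrow> asub \<Gamma>' S' Q' \<Longrightarrow> asub \<Gamma>' Q' T' \<Longrightarrow> asub \<Gamma>' S' T')
   \<Longrightarrow> asub \<Gamma> S T"
proof (induction arbitrary: T rule: asub.induct)
  case (A_Top \<Gamma> S)
  then show ?case using asub_Top_inv by (auto intro: asub.intros)
next
  case (A_Refl \<Gamma> i)
  then show ?case by simp
next
  case (A_Var Q i \<Gamma> U)
  have wf: "wf_env \<Gamma> \<and> wf_ty \<Gamma> (TVar i) \<and> wf_ty \<Gamma> T"
    using asub_wf[OF A_Var.prems(1)] A_Var.hyps by auto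
  show ?case
  proof (cases "T = Top")
    case True then show ?thesis using wf by (auto intro: asub.intros)
  next
    case F1: False
    show ?thesis
    proof (cases "T = TVar i")
      case True then show ?thesis using wf by (auto intro: asub.intros)
    next
      case False
      then show ?thesis using F1 A_Var by (intro asub.A_Var) auto
    qed
  qed
next
  case (A_Arr \<Gamma> S' S T0 T')
  from asub_Arr_inv[OF A_Arr.prems(1)] show ?case
  proof
    assume "T = Top" then show ?thesis
      using asub_wf[OF asub.A_Arr[OF A_Arr.hyps]] by (auto intro: asub.intros)
  next
    assume "\<exists>A' B'. T = Arr A' B' \<and> asub \<Gamma> A' S' \<and> asub \<Gamma> T' B'"
    then obtain A' B' where "T = Arr A' B'" "asub \<Gamma> A' S'" "asub \<Gamma> T' B'" by blast
    moreover have "asub \<Gamma> A' S" using A_Arr.prems(2)[of S'] A_Arr.hyps(1) \<open>asub \<Gamma> A' S'\<close> by simp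
    moreover have "asub \<Gamma> T0 B'" using A_Arr.prems(2)[of T'] A_Arr.hyps(2) \<open>asub \<Gamma> T' B'\<close> by simp
    ultimately show ?thesis by (auto intro: asub.intros)
  qed
next
  case (A_AllFun S \<Gamma> T0 T')
  from asub_AllK_inv[OF A_AllFun.prems(1)] show ?case
  proof (elim disjE exE conjE)
    assume "T = Top" then show ?thesis
      using asub_wf[OF asub.A_AllFun[OF A_AllFun.hyps]] by (auto intro: asub.intros)
  next
    fix B' assume T: "T = AllK S B'" "asub (TVarB S # \<Gamma>) T' B'"
    have "asub (TVarB S # \<Gamma>) T0 B'" using A_AllFun.prems(2)[of T'] A_AllFun.hyps T by simp
    then show ?thesis using T by (auto intro: asub.intros)
  next
    fix A' B' assume T: "T = AllT A' B'" "asub \<Gamma> A' S" "asub (TVarB S # \<Gamma>) T' B'"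
    have "asub (TVarB S # \<Gamma>) T0 B'" using A_AllFun.prems(2)[of T'] A_AllFun.hyps T by simp
    then show ?thesis using T by (auto intro: asub.intros)
  qed
next
  case (A_AllLoc \<Gamma> T0 S0 S1 T1)
  from asub_AllT_inv[OF A_AllLoc.prems(1)] show ?case
  proof (elim disjE exE conjE)
    assume "T = Top" then show ?thesis
      using asub_wf[OF asub.A_AllLoc[OF A_AllLoc.hyps]] by (auto intro: asub.intros)
  next
    fix A' B' assume T: "T = AllT A' B'" "asub \<Gamma> A' T0" "asub (TVarB Top # \<Gamma>) T1 B'"
    have wS0: "wf_ty \<Gamma> S0" using asub_wf[OF A_AllLoc.hyps(1)] by simp
    have n: "asub (TVarB S0 # \<Gamma>) T1 B'" using asub_narrow_top[OF T(3), of "[]"] wS0 by simp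
    have "asub \<Gamma> A' S0" using A_AllLoc.prems(2)[of T0] A_AllLoc.hyps T by simp
    moreover have "asub (TVarB S0 # \<Gamma>) S1 B'" using A_AllLoc.prems(2)[of T1] A_AllLoc.hyps n by simp
    ultimately show ?thesis using T by (auto intro: asub.intros)
  qed
next
  case (A_AllTop \<Gamma> T0 S0 S1 T1)
  from asub_AllT_inv[OF A_AllTop.prems(1)] show ?case
  proof (elim disjE exE conjE)
    assume "T = Top" then show ?thesis
      using asub_wf[OF asub.A_AllTop[OF A_AllTop.hyps]] by (auto intro: asub.intros)
  next
    fix A' B' assume T: "T = AllT A' B'" "asub \<Gamma> A' T0" "asub (TVarB Top # \<Gamma>) T1 B'"
    have "asub \<Gamma> A' S0" using A_AllTop.prems(2)[of T0] A_AllTop.hyps T by simp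
    moreover have "asub (TVarB Top # \<Gamma>) S1 B'" using A_AllTop.prems(2)[of T1] A_AllTop.hyps T by simp
    ultimately show ?thesis using T by (auto intro: asub.intros)
  qed
qed

lemma asub_trans_n:
  "\<forall>Q. size Q = n \<longrightarrow> (\<forall>\<Gamma> S T. asub \<Gamma> S Q \<longrightarrow> asub \<Gamma> Q T \<longrightarrow> asub \<Gamma> S T)"
proof (induction n rule: less_induct)
  case (less n)
  show ?case
  proof (intro allI impI)
    fix Q \<Gamma> S T assume "size Q = n" "asub \<Gamma> S Q" "asub \<Gamma> Q T"
    then show "asub \<Gamma> S T" using asub_trans_aux less by blast
  qed
qed

lemma asub_trans: "asub \<Gamma> S Q \<Longrightarrow> asub \<Gamma> Q T \<Longrightarrow> asub \<Gamma> S T"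
  using asub_trans_n by blast

lemma shift_not_var: "shiftT (Suc i) 0 U \<noteq> TVar i"
  by (cases U) auto

lemma sub_asub: "sub \<Gamma> S T \<Longrightarrow> asub \<Gamma> S T"
proof (induction rule: sub.induct)
  case (S_Var \<Gamma> i U)
  have w: "wf_ty \<Gamma> (shiftT (Suc i) 0 U)" using wf_shift_lookup S_Var by blast
  show ?case
  proof (cases "shiftT (Suc i) 0 U = Top")
    case True then show ?thesis using S_Var by (auto intro: asub.intros)
  next
    case False
    then show ?thesis using S_Var w shift_not_var asub_refl by (intro asub.A_Var) auto
  qed
next
  case (S_Top \<Gamma> T) then show ?case by (auto intro: asub.intros)
next
  case (S_Refl \<Gamma> T) then show ?case using asub_refl by auto
next
  case (S_Trans \<Gamma> T T' T'') then show ?case using asub_trans by blast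
qed (auto intro: asub.intros)

lemma asub_sub: "asub \<Gamma> S T \<Longrightarrow> sub \<Gamma> S T"
proof (induction rule: asub.induct)
  case (A_Var T i \<Gamma> U)
  have "wf_env \<Gamma>" using asub_wf[OF A_Var.hyps(5)] by simp
  then have "sub \<Gamma> (TVar i) (shiftT (Suc i) 0 U)" using A_Var by (auto intro: sub.S_Var)
  then show ?case using A_Var sub.S_Trans by blast
qed (auto intro: sub.intros)

theorem proposition6p2:
  assumes "wf_env \<Theta>" and "wf_ty \<Theta> S" and "wf_ty \<Theta> T"
  shows "sub \<Theta> S T \<longleftrightarrow> asub \<Theta> S T"
  using sub_asub asub_sub by blast

end
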